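(* Let $X$ be a finite set and $A\subseteq X$ with $|A|$ even. \begin{enumerate} \item Let $(p_B)_{B\subseteq X}$ be nonnegative reals summing to $1$, $\tilde p_B=(p_B+p_{X\setminus B})/2$, $s_C=\sum_{B\in\mathcal{S}_C}p_B$ with $\mathcal{S}_C=\{B\subseteq X: C\cap B\neq\emptyset,\ C\cap(X\setminus B)\neq\emptyset\}$, and $\gamma_A=\sum_{B\subseteq X:\,|A\cap B|\text{ odd}}\tilde p_B$. Then \[ \gamma_A=\frac14\sum_{\substack{B\subseteq A\\|B|\text{ even}}}2^{|B|}\,\mathbb{E}_{|A|-|B|}\,s_B . \] \item Let $T$ be a phylogenetic tree with leaf set $X$ and nonnegative branch lengths, $\tilde w_B=w_{B|X\setminus B}/2$ where $w_{B|X\setminus B}$ is the length of the edge of $T$ whose deletion splits the leaves into $B$ and $X\setminus B$ (or $0$ if there is none), $\delta_C$ the sum of branch lengths of the smallest subtree of $T$ connecting $C$ ($0$ if $|C|\le1$), and $\mu_A=\sum_{B\subseteq X:\,|A\cap B|\text{ odd}}\tilde w_B$. Then \[ \mu_A=\frac14\sum_{\substack{B\subseteq A\\|B|\text{ even}}}2^{|B|}\,\mathbb{E}_{|A|-|B|}\,\delta_B . \] \end{enumerate}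
   Context: The Euler numbers $\mathbb{E}_k$ are defined by $\frac{1}{\cosh(x)}=\frac{2}{e^x+e^{-x}}=\sum_{k=0}^\infty \mathbb{E}_k\frac{x^k}{k!}$. $p_B$ is the probability that at a bi-allelic site exactly the taxa in $B$ have state $1$, and $s_C$ is the probability that a site is non-constant over $C$. A phylogenetic tree with leaf set $X$ is a tree whose leaves are bijectively labelled by $X$ and whose internal vertices have degree at least $3$. *)

theory Defs
  imports "HOL-Computational_Algebra.Formal_Power_Series"
begin

definition sech_fps :: "real fps" where
  "sech_fps = fps_const 2 * inverse (fps_exp 1 + fps_exp (-1))"

definition euler_number :: "nat \<Rightarrow> real" where
  "euler_number k = fact k * fps_nth sech_fps k"

definition ptilde :: "'a set \<Rightarrow> ('a set \<Rightarrow> real) \<Rightarrow> 'a set \<Rightarrow> real" where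
  "ptilde X p B = (p B + p (X - B)) / 2"

definition S_set :: "'a set \<Rightarrow> 'a set \<Rightarrow> 'a set set" where
  "S_set X C = {B. B \<subseteq> X \<and> C \<inter> B \<noteq> {} \<and> C \<inter> (X - B) \<noteq> {}}"

definition s_nonconst :: "'a set \<Rightarrow> ('a set \<Rightarrow> real) \<Rightarrow> 'a set \<Rightarrow> real" where
  "s_nonconst X p C = (\<Sum>B\<in>S_set X C. p B)"

definition gamma :: "'a set \<Rightarrow> ('a set \<Rightarrow> real) \<Rightarrow> 'a set \<Rightarrow> real" where
  "gamma X p A = (\<Sum>B\<in>{B. B \<subseteq> X \<and> odd (card (A \<inter> B))}. ptilde X p B)"

definition adj :: "'v set set \<Rightarrow> 'v \<Rightarrow> 'v \<Rightarrow> bool" where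
  "adj E u v \<longleftrightarrow> {u, v} \<in> E"

definition is_path :: "'v set set \<Rightarrow> 'v list \<Rightarrow> bool" where
  "is_path E xs \<longleftrightarrow> xs \<noteq> [] \<and> distinct xs \<and> (\<forall>i. Suc i < length xs \<longrightarrow> adj E (xs ! i) (xs ! Suc i))"

definition path_edges :: "'v list \<Rightarrow> 'v set set" where
  "path_edges xs = {{xs ! i, xs ! Suc i} | i. Suc i < length xs}"

definition is_cycle :: "'v set set \<Rightarrow> 'v list \<Rightarrow> bool" where
  "is_cycle E xs \<longleftrightarrow> length xs \<ge> 3 \<and> is_path E xs \<and> adj E (last xs) (hd xs)"

definition graph :: "'v set \<Rightarrow> 'v set set \<Rightarrow> bool" where
  "graph V E \<longleftrightarrow> finite V \<and> (\<forall>e\<in>E. \<exists>u v. e = {u, v} \<and> u \<noteq> v \<and> u \<in> V \<and> v \<in> V)"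

definition connected_graph :: "'v set \<Rightarrow> 'v set set \<Rightarrow> bool" where
  "connected_graph V E \<longleftrightarrow> (\<forall>u\<in>V. \<forall>v\<in>V. \<exists>xs. is_path E xs \<and> hd xs = u \<and> last xs = v)"

definition is_tree :: "'v set \<Rightarrow> 'v set set \<Rightarrow> bool" where
  "is_tree V E \<longleftrightarrow> graph V E \<and> V \<noteq> {} \<and> connected_graph V E \<and> \<not> (\<exists>xs. is_cycle E xs)"

definition degree :: "'v set set \<Rightarrow> 'v \<Rightarrow> nat" where
  "degree E v = card {e\<in>E. v \<in> e}"

definition phylo_tree :: "'a set \<Rightarrow> 'v set \<Rightarrow> 'v set set \<Rightarrow> ('a \<Rightarrow> 'v) \<Rightarrow> bool" where
  "phylo_tree X V E phi \<longleftrightarrow> is_tree V E \<and>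
     bij_betw phi X {v\<in>V. degree E v \<le> 1} \<and>
     (\<forall>v\<in>V. degree E v \<le> 1 \<or> degree E v \<ge> 3)"

definition split_side :: "'a set \<Rightarrow> 'v set set \<Rightarrow> ('a \<Rightarrow> 'v) \<Rightarrow> 'v set \<Rightarrow> 'v \<Rightarrow> 'a set" where
  "split_side X E phi e u = {x\<in>X. \<exists>xs. is_path (E - {e}) xs \<and> hd xs = u \<and> last xs = phi x}"

definition edge_induces :: "'a set \<Rightarrow> 'v set set \<Rightarrow> ('a \<Rightarrow> 'v) \<Rightarrow> 'v set \<Rightarrow> 'a set \<Rightarrow> bool" where
  "edge_induces X E phi e B \<longleftrightarrow> (\<exists>u\<in>e. split_side X E phi e u = B)"

text \<open>w_{B|X-B}: the length of the edge inducing the split B|X-B (0 if there is none); in a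
  phylogenetic tree there is at most one such edge, so we take the sum over all such edges.\<close>
definition split_weight :: "'a set \<Rightarrow> 'v set set \<Rightarrow> ('a \<Rightarrow> 'v) \<Rightarrow> ('v set \<Rightarrow> real) \<Rightarrow> 'a set \<Rightarrow> real" where
  "split_weight X E phi w B = (\<Sum>e\<in>{e\<in>E. edge_induces X E phi e B}. w e)"

definition wtilde :: "'a set \<Rightarrow> 'v set set \<Rightarrow> ('a \<Rightarrow> 'v) \<Rightarrow> ('v set \<Rightarrow> real) \<Rightarrow> 'a set \<Rightarrow> real" where
  "wtilde X E phi w B = split_weight X E phi w B / 2"

text \<open>Edges of the smallest subtree connecting the leaves labelled by C: the union of the paths
  between pairs of such leaves.\<close>
definition span_edges :: "'v set set \<Rightarrow> ('a \<Rightarrow> 'v) \<Rightarrow> 'a set \<Rightarrow> 'v set set" where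
  "span_edges E phi C = \<Union>{path_edges xs | xs x y. x \<in> C \<and> y \<in> C \<and> is_path E xs \<and> hd xs = phi x \<and> last xs = phi y}"

definition delta :: "'v set set \<Rightarrow> ('a \<Rightarrow> 'v) \<Rightarrow> ('v set \<Rightarrow> real) \<Rightarrow> 'a set \<Rightarrow> real" where
  "delta E phi w C = (if card C \<le> 1 then 0 else (\<Sum>e\<in>span_edges E phi C. w e))"

definition mu :: "'a set \<Rightarrow> 'v set set \<Rightarrow> ('a \<Rightarrow> 'v) \<Rightarrow> ('v set \<Rightarrow> real) \<Rightarrow> 'a set \<Rightarrow> real" where
  "mu X E phi w A = (\<Sum>B\<in>{B. B \<subseteq> X \<and> odd (card (A \<inter> B))}. wtilde X E phi w B)"

end

theory Submission
  imports Defs "HOL-Computational_Algebra.Polynomial"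
begin


definition Lf :: "real poly \<Rightarrow> real" where
  "Lf p = (\<Sum>i\<le>degree p. coeff p i * euler_number i)"

lemma Lf_alt: "degree p \<le> N \<Longrightarrow> Lf p = (\<Sum>i\<le>N. coeff p i * euler_number i)"
  unfolding Lf_def by (rule sum.mono_neutral_left) (auto simp: coeff_eq_0)

lemma Lf_add: "Lf (p + q) = Lf p + Lf q"
proof -
  let ?N = "max (degree p) (degree q)"
  have "degree (p + q) \<le> ?N" by (rule degree_add_le) auto
  then show ?thesis
    by (simp add: Lf_alt[of p ?N] Lf_alt[of q ?N] Lf_alt[of "p+q" ?N] distrib_right sum.distrib)
qed

lemma Lf_smult: "Lf (smult c p) = c * Lf p"
  by (simp add: Lf_alt[of "smult c p" "degree p"] Lf_def sum_distrib_left mult.assoc)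

lemma Lf_minus: "Lf (- p) = - Lf p"
  using Lf_smult[of "-1" p] by simp

lemma Lf_diff: "Lf (p - q) = Lf p - Lf q"
  using Lf_add[of p "-q"] Lf_minus[of q] by simp

lemma Lf_0: "Lf 0 = 0" by (simp add: Lf_def)

lemma Lf_sum: "Lf (sum f A) = (\<Sum>i\<in>A. Lf (f i))"
  by (induction A rule: infinite_finite_induct) (simp_all add: Lf_add Lf_0)

lemma Lf_linpow: "Lf ([:a,1:]^n) = (\<Sum>i\<le>n. of_nat (n choose i) * a^(n-i) * euler_number i)"
proof -
  have "degree ([:a,1:]^n) \<le> n"
    using degree_power_le[of "[:a,1:]" n] by simp
  then show ?thesis by (simp add: Lf_alt coeff_linear_poly_power)
qed

lemma Lf_xpow: "Lf ([:0,1:]^n) = euler_number n"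
proof -
  have "Lf ([:0,1:]^n) = (\<Sum>i\<le>n. of_nat (n choose i) * 0^(n-i) * euler_number i)"
    by (rule Lf_linpow)
  also have "\<dots> = (\<Sum>i\<in>{n}. of_nat (n choose i) * 0^(n-i) * euler_number i)"
    by (rule sum.mono_neutral_right) auto
  finally show ?thesis by simp
qed

lemma Lf_monom_smult: "Lf (smult c ([:0,1:]^n)) = c * euler_number n"
  by (simp add: Lf_smult Lf_xpow)

lemma euler_rec:
  "(\<Sum>i\<le>k. of_nat (k choose i) * euler_number i * (1 + (-1)^(k-i))) = (if k = 0 then 2 else 0)"
proof -
  define g :: "real fps" where "g = fps_exp 1 + fps_exp (-1)"
  have g0: "fps_nth g 0 \<noteq> 0" by (simp add: g_def)
  have "sech_fps * g = fps_const 2 * (inverse g * g)"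
    by (simp add: sech_fps_def g_def mult.assoc)
  also have "\<dots> = fps_const 2" using inverse_mult_eq_1[OF g0] by simp
  finally have eq: "sech_fps * g = fps_const 2" .
  have "fps_nth (sech_fps * g) k = (\<Sum>i=0..k. fps_nth sech_fps i * fps_nth g (k - i))"
    by (rule fps_mult_nth)
  also have "\<dots> = (\<Sum>i\<le>k. euler_number i / fact i * ((1 + (-1)^(k-i)) / fact (k - i)))"
    by (rule sum.cong) (auto simp: euler_number_def g_def add_divide_distrib)
  finally have e1: "(\<Sum>i\<le>k. euler_number i / fact i * ((1 + (-1)^(k-i)) / fact (k - i))) = (if k = 0 then 2 else 0)"
    using eq by simp
  have "(\<Sum>i\<le>k. of_nat (k choose i) * euler_number i * (1 + (-1)^(k-i)))
      = fact k * (\<Sum>i\<le>k. euler_number i / fact i * ((1 + (-1)^(k-i)) / fact (k - i)))"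
    unfolding sum_distrib_left
  proof (rule sum.cong)
    fix i assume "i \<in> {..k}"
    then have "real (k choose i) = fact k / (fact i * fact (k - i))"
      by (simp add: binomial_fact)
    then show "of_nat (k choose i) * euler_number i * (1 + (-1)^(k-i)) =
        fact k * (euler_number i / fact i * ((1 + (-1)^(k-i)) / fact (k - i)))"
      by (simp add: field_simps)
  qed simp
  also have "\<dots> = (if k = 0 then 2 else 0)" using e1 by simp
  finally show ?thesis .
qed

lemma euler_odd: "odd k \<Longrightarrow> euler_number k = 0"
proof (induction k rule: less_induct)
  case (less k)
  then obtain m where k: "k = Suc m" by (cases k) auto
  have "(\<Sum>i\<le>m. of_nat (k choose i) * euler_number i * (1 + (-1)^(k-i))) = 0"
  proof (rule sum.neutral, intro ballI)
    fix i assume i: "i \<in> {..m}"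
    show "of_nat (k choose i) * euler_number i * (1 + (-1)^(k-i)) = 0"
    proof (cases "odd i")
      case True then show ?thesis using less.IH[of i] i k by auto
    next
      case False
      then have "odd (k - i)" using less.prems i k by auto
      then show ?thesis by simp
    qed
  qed
  moreover have "(\<Sum>i\<le>k. of_nat (k choose i) * euler_number i * (1 + (-1)^(k-i))) = 0"
    using euler_rec[of k] k by simp
  ultimately show ?case using k by (simp add: sum.atMost_Suc)
qed

lemma pcompose_xpow: "pcompose ([:0,1:]^i) q = (q::real poly)^i"
  by (induction i) (auto simp: pcompose_mult pcompose_pCons pcompose_1)

lemma pcompose_power: "pcompose (p^i) q = (pcompose p (q::real poly))^i"
  by (induction i) (auto simp: pcompose_mult pcompose_1)

lemma Lf_pcompose: "Lf (pcompose p q) = (\<Sum>i\<le>degree p. coeff p i * Lf (q^i))"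
proof -
  have "pcompose p q = pcompose (\<Sum>i\<le>degree p. monom (coeff p i) i) q"
    by (simp add: poly_as_sum_of_monoms)
  also have "\<dots> = (\<Sum>i\<le>degree p. smult (coeff p i) (q^i))"
    by (simp add: pcompose_sum monom_altdef pcompose_smult pcompose_xpow)
  finally show ?thesis by (simp add: Lf_sum Lf_smult)
qed

lemma Lf_self: "Lf p = (\<Sum>i\<le>degree p. coeff p i * Lf ([:0,1:]^i))"
  unfolding Lf_xpow by (simp add: Lf_def)

lemma sum_zero_pow: "(\<Sum>i\<le>n. f i * (0::real)^i) = f 0"
  by (induction n) auto

lemma Lf_shift: "Lf (pcompose p [:1,1:]) + Lf (pcompose p [:-1,1:]) = 2 * poly p 0"
proof -
  have m: "Lf ([:1,1:]^k) + Lf ([:-1,1:]^k) = 2 * 0^k" for k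
  proof -
    have "Lf ([:1,1:]^k) + Lf ([:-1,1:]^k) =
      (\<Sum>i\<le>k. of_nat (k choose i) * euler_number i * (1 + (-1)^(k-i)))"
      by (simp add: Lf_linpow sum.distrib[symmetric] algebra_simps)
    then show ?thesis by (simp add: euler_rec)
  qed
  have "Lf (pcompose p [:1,1:]) + Lf (pcompose p [:-1,1:]) =
     (\<Sum>i\<le>degree p. coeff p i * (Lf ([:1,1:]^i) + Lf ([:-1,1:]^i)))"
    by (simp add: Lf_pcompose sum.distrib[symmetric] algebra_simps)
  also have "\<dots> = 2 * (\<Sum>i\<le>degree p. coeff p i * 0^i)"
    unfolding m sum_distrib_left by (rule sum.cong) (simp_all add: mult_ac)
  also have "\<dots> = 2 * poly p 0" by (simp only: sum_zero_pow poly_0_coeff_0)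
  finally show ?thesis .
qed

lemma Lf_reflect: "Lf (pcompose p [:0,-1:]) = Lf p"
proof -
  have m: "Lf ([:0,-1:]^k) = Lf ([:0,1:]^k)" for k
  proof -
    have "[:0,-1:]^k = (smult (-1) [:0,1::real:])^k" by simp
    also have "\<dots> = smult ((-1)^k) ([:0,1::real:]^k)" by (rule smult_power)
    finally have "[:0,-1:]^k = smult ((-1)^k) ([:0,1::real:]^k)" .
    then show ?thesis by (cases "even k") (auto simp: Lf_smult Lf_xpow euler_odd Lf_minus)
  qed
  show ?thesis by (simp add: Lf_pcompose Lf_self[of p] m)
qed

lemma Lf_shift2: "Lf (pcompose q [:2,1:]) + Lf q = 2 * poly q 1"
proof -
  define p where "p = pcompose q [:1,1:]"
  have "pcompose p [:1,1:] = pcompose q [:2,1:]"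
    by (simp add: p_def pcompose_assoc[symmetric] pcompose_pCons)
  moreover have "pcompose p [:-1,1:] = q"
    by (simp add: p_def pcompose_assoc[symmetric] pcompose_pCons)
  moreover have "poly p 0 = poly q 1" by (simp add: p_def poly_pcompose)
  ultimately show ?thesis using Lf_shift[of p] by simp
qed

lemma poly_identity:
  assumes "even (a + b)"
  shows "Lf ([:2,1:]^(a+b)) - Lf ([:0,1:]^b * [:2,1:]^a) - Lf ([:0,1:]^a * [:2,1:]^b)
         + euler_number (a+b) = 4 * (if odd a then 1 else 0)"
proof -
  have h1: "Lf ([:2,1:]^(a+b)) + euler_number (a+b) = 2"
    using Lf_shift2[of "[:0,1:]^(a+b)"] by (simp add: pcompose_xpow Lf_xpow)
  define q where "q = [:0,1::real:]^a * [:-2,1:]^b"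
  have q1: "pcompose q [:2,1:] = [:0,1:]^b * [:2,1:]^a"
    by (simp add: q_def pcompose_mult pcompose_xpow pcompose_power pcompose_pCons mult.commute)
  have "pcompose q [:0,-1:] = [:0,-1:]^a * [:-2,-1:]^b"
    by (simp add: q_def pcompose_mult pcompose_xpow pcompose_power pcompose_pCons)
  also have "\<dots> = smult ((-1)^a) ([:0,1:]^a) * smult ((-1)^b) ([:2,1:]^b)"
  proof -
    have "[:0,-1:] = smult (-1) [:0,1::real:]" "[:-2,-1:] = smult (-1) [:2,1::real:]" by simp_all
    then show ?thesis by (simp only: smult_power)
  qed
  also have "\<dots> = smult ((-1)^(a+b)) ([:0,1:]^a * [:2,1:]^b)"
    by (simp add: power_add mult_ac)
  also have "\<dots> = [:0,1:]^a * [:2,1:]^b" using assms by simp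
  finally have q2: "Lf q = Lf ([:0,1:]^a * [:2,1:]^b)" using Lf_reflect[of q] by simp
  have q3: "poly q 1 = (-1)^b" by (simp add: q_def)
  have h2: "Lf ([:0,1:]^b * [:2,1:]^a) + Lf ([:0,1:]^a * [:2,1:]^b) = 2 * (-1)^b"
    using Lf_shift2[of q] q1 q2 q3 by simp
  have "(-1::real)^b = (-1)^a" using assms
    by (metis even_add neg_one_even_power neg_one_odd_power)
  then show ?thesis using h1 h2 by (cases "even a") auto
qed

lemma const_poly_power: "[:c:]^k = [:(c::real)^k:]"
  by (induction k) auto

lemma T_eq:
  assumes "finite S"
  shows "(\<Sum>C\<in>Pow S. 2^card C * euler_number (m + card S - card C))
         = Lf ([:0,1:]^m * [:2,1:]^card S)"
proof -
  have "[:2,1:]^card S = (\<Prod>i\<in>S. [:2:] + [:0,1::real:])" by simp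
  also have "\<dots> = (\<Sum>X\<in>Pow S. (\<Prod>i\<in>X. [:2:]) * (\<Prod>i\<in>S-X. [:0,1:]))"
    by (rule prod_add[OF assms])
  finally have e: "[:2,1:]^card S = (\<Sum>X\<in>Pow S. [:2^card X:] * [:0,1::real:]^card (S-X))"
    by (simp add: const_poly_power)
  have "[:0,1:]^m * [:2,1:]^card S = (\<Sum>X\<in>Pow S. smult (2^card X) ([:0,1::real:]^(m + card S - card X)))"
    unfolding e sum_distrib_left
  proof (rule sum.cong)
    fix X assume "X \<in> Pow S"
    then have "card X \<le> card S" "card (S - X) = card S - card X"
      using assms by (auto intro: card_mono simp: card_Diff_subset finite_subset)
    then have "m + card S - card X = m + card (S - X)" by simp
    then show "[:0,1:]^m * ([:2^card X:] * [:0,1::real:]^card (S-X)) =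
          smult (2^card X) ([:0,1::real:]^(m + card S - card X))"
      by (simp add: power_add mult_ac)
  qed simp
  then show ?thesis by (simp add: Lf_sum Lf_monom_smult)
qed

lemma core:
  fixes A D :: "'a set"
  assumes fin: "finite A" and ev: "even (card A)" and DA: "D \<subseteq> A"
  shows "(\<Sum>C\<in>{C. C \<subseteq> A \<and> even (card C)}. 2^card C * euler_number (card A - card C) *
            (if C \<inter> D \<noteq> {} \<and> C \<inter> (A - D) \<noteq> {} then 1 else 0)) = 4 * (if odd (card D) then 1 else 0)"
proof -
  define f where "f (C::'a set) = (2::real)^card C * euler_number (card A - card C)" for C
  define ind where "ind C = (if C \<inter> D \<noteq> {} \<and> C \<inter> (A - D) \<noteq> {} then 1 else (0::real))" for C
  have s1: "(\<Sum>C\<in>{C. C \<subseteq> A \<and> even (card C)}. f C * ind C) = (\<Sum>C\<in>Pow A. f C * ind C)"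
  proof (rule sum.mono_neutral_left)
    show "\<forall>C\<in>Pow A - {C. C \<subseteq> A \<and> even (card C)}. f C * ind C = 0"
    proof
      fix C assume C: "C \<in> Pow A - {C. C \<subseteq> A \<and> even (card C)}"
      then have "card C \<le> card A" "odd (card C)" using fin by (auto intro: card_mono)
      then have "odd (card A - card C)" using ev by auto
      then show "f C * ind C = 0" by (simp add: f_def euler_odd)
    qed
  qed (use fin in auto)
  have s2: "f C * ind C = f C - (if C \<subseteq> A - D then f C else 0) - (if C \<subseteq> D then f C else 0)
        + (if C = {} then f C else 0)" if "C \<in> Pow A" for C :: "'a set"
    using that unfolding ind_def by auto
  have s3: "(\<Sum>C\<in>Pow A. if C \<subseteq> S then f C else 0) = (\<Sum>C\<in>Pow S. f C)" if "S \<subseteq> A" for S :: "'a set"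
  proof -
    have "Pow S = {C \<in> Pow A. C \<subseteq> S}" using that by auto
    then show ?thesis using fin sum.inter_filter[of "Pow A" f "\<lambda>C. C \<subseteq> S"] by simp
  qed
  have s4: "(\<Sum>C\<in>Pow A. if C = {} then f C else 0) = euler_number (card A)"
    using fin by (simp add: sum.delta' f_def)
  have cA: "card A = card D + card (A - D)"
    using DA fin by (simp add: card_Diff_subset finite_subset card_mono)
  have finD: "finite D" "finite (A - D)" using DA fin finite_subset by auto
  have t1: "(\<Sum>C\<in>Pow A. f C) = Lf ([:0,1:]^0 * [:2,1:]^card A)"
    using T_eq[OF fin, of 0] by (simp add: f_def)
  have t2: "(\<Sum>C\<in>Pow D. f C) = Lf ([:0,1:]^card (A-D) * [:2,1:]^card D)"
    using T_eq[OF finD(1), of "card (A - D)"] cA by (simp add: f_def add.commute)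
  have t3: "(\<Sum>C\<in>Pow (A-D). f C) = Lf ([:0,1:]^card D * [:2,1:]^card (A-D))"
    using T_eq[OF finD(2), of "card D"] cA by (simp add: f_def)
  have "(\<Sum>C\<in>{C. C \<subseteq> A \<and> even (card C)}. f C * ind C)
      = (\<Sum>C\<in>Pow A. f C) - (\<Sum>C\<in>Pow (A-D). f C) - (\<Sum>C\<in>Pow D. f C) + euler_number (card A)"
  proof -
    have "(\<Sum>C\<in>Pow A. f C * ind C) = (\<Sum>C\<in>Pow A. f C - (if C \<subseteq> A - D then f C else 0) - (if C \<subseteq> D then f C else 0)
        + (if C = {} then f C else 0))"
      by (rule sum.cong) (use s2 in auto)
    also have "\<dots> = (\<Sum>C\<in>Pow A. f C) - (\<Sum>C\<in>Pow A. if C \<subseteq> A - D then f C else 0)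
        - (\<Sum>C\<in>Pow A. if C \<subseteq> D then f C else 0) + (\<Sum>C\<in>Pow A. if C = {} then f C else 0)"
      by (simp only: sum.distrib sum_subtractf)
    finally show ?thesis using s1 s3[of "A - D"] s3[of D] s4 DA by simp
  qed
  also have "\<dots> = 4 * (if odd (card D) then 1 else 0)"
    using poly_identity[of "card D" "card (A-D)"] ev cA t1 t2 t3 by simp
  finally show ?thesis by (simp add: f_def ind_def)
qed

lemma swap_core:
  fixes A :: "'a set" and I :: "'b set" and D :: "'b \<Rightarrow> 'a set"
  assumes fin: "finite A" and ev: "even (card A)" and finI: "finite I"
    and DA: "\<And>i. i \<in> I \<Longrightarrow> D i \<subseteq> A"
    and P: "\<And>C i. C \<subseteq> A \<Longrightarrow> i \<in> I \<Longrightarrow> P C i \<longleftrightarrow> (C \<inter> D i \<noteq> {} \<and> C \<inter> (A - D i) \<noteq> {})"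
  shows "1/4 * (\<Sum>C\<in>{C. C \<subseteq> A \<and> even (card C)}. 2^card C * euler_number (card A - card C) *
            (\<Sum>i\<in>I. g i * (if P C i then 1 else 0)))
        = (\<Sum>i\<in>I. g i * (if odd (card (D i)) then 1 else 0))"
proof -
  let ?K = "{C. C \<subseteq> A \<and> even (card C)}"
  have "(\<Sum>C\<in>?K. 2^card C * euler_number (card A - card C) * (\<Sum>i\<in>I. g i * (if P C i then 1 else 0)))
     = (\<Sum>i\<in>I. g i * (\<Sum>C\<in>?K. 2^card C * euler_number (card A - card C) * (if P C i then 1 else 0)))"
    by (simp add: sum_distrib_left sum_distrib_right mult_ac sum.swap[of _ ?K I])
  also have "\<dots> = (\<Sum>i\<in>I. g i * (4 * (if odd (card (D i)) then 1 else 0)))"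
  proof (rule sum.cong)
    fix i assume i: "i \<in> I"
    have "(\<Sum>C\<in>?K. 2^card C * euler_number (card A - card C) * (if P C i then 1 else 0))
        = (\<Sum>C\<in>?K. 2^card C * euler_number (card A - card C) *
            (if C \<inter> D i \<noteq> {} \<and> C \<inter> (A - D i) \<noteq> {} then 1 else 0))"
      by (rule sum.cong) (use P i in auto)
    also have "\<dots> = 4 * (if odd (card (D i)) then 1 else 0)"
      by (rule core[OF fin ev DA[OF i]])
    finally show "g i * (\<Sum>C\<in>?K. 2^card C * euler_number (card A - card C) * (if P C i then 1 else 0))
        = g i * (4 * (if odd (card (D i)) then 1 else 0))" by simp
  qed simp
  also have "\<dots> = 4 * (\<Sum>i\<in>I. g i * (if odd (card (D i)) then 1 else 0))"
    by (simp add: sum_distrib_left mult_ac)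
  finally show ?thesis by simp
qed

lemma part1:
  fixes X A :: "'a set"
  assumes finX: "finite X" and AX: "A \<subseteq> X" and ev: "even (card A)"
  shows "gamma X p A = 1/4 * (\<Sum>B\<in>{B. B \<subseteq> A \<and> even (card B)}.
                 2 ^ card B * euler_number (card A - card B) * s_nonconst X p B)"
proof -
  have finA: "finite A" using finX AX finite_subset by auto
  let ?B = "{B. B \<subseteq> X \<and> odd (card (A \<inter> B))}"
  have oddc: "odd (card (A \<inter> (X - B)))" if "B \<in> ?B" for B
  proof -
    have "A \<inter> (X - B) = A - (A \<inter> B)" using AX by auto
    then have "card (A \<inter> (X - B)) = card A - card (A \<inter> B)"
      using finA by (simp add: card_Diff_subset finite_subset)
    moreover have "card (A \<inter> B) \<le> card A" using finA by (simp add: card_mono)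
    ultimately show ?thesis using that ev by auto
  qed
  have r: "(\<Sum>B\<in>?B. p (X - B)) = (\<Sum>B\<in>?B. p B)"
    by (rule sum.reindex_bij_witness[of _ "\<lambda>B. X - B" "\<lambda>B. X - B"]) (use oddc in auto)
  have "gamma X p A = (\<Sum>B\<in>?B. p B)"
    unfolding gamma_def ptilde_def using r
    by (simp add: sum_divide_distrib[symmetric] sum.distrib)
  also have "\<dots> = (\<Sum>B\<in>Pow X. p B * (if odd (card (A \<inter> B)) then 1 else 0))"
  proof -
    have "(\<Sum>B\<in>?B. p B) = (\<Sum>B\<in>Pow X. if odd (card (A \<inter> B)) then p B else 0)"
      using finX sum.inter_filter[of "Pow X" p "\<lambda>B. odd (card (A \<inter> B))"] by simp
    also have "\<dots> = (\<Sum>B\<in>Pow X. p B * (if odd (card (A \<inter> B)) then 1 else 0))"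
      by (rule sum.cong) auto
    finally show ?thesis .
  qed
  also have "\<dots> = 1/4 * (\<Sum>C\<in>{C. C \<subseteq> A \<and> even (card C)}. 2^card C * euler_number (card A - card C) *
            (\<Sum>B\<in>Pow X. p B * (if C \<inter> B \<noteq> {} \<and> C \<inter> (X - B) \<noteq> {} then 1 else 0)))"
    by (rule swap_core[symmetric, OF finA ev]) (use finX AX in auto)
  also have "\<dots> = 1/4 * (\<Sum>B\<in>{B. B \<subseteq> A \<and> even (card B)}.
                 2 ^ card B * euler_number (card A - card B) * s_nonconst X p B)"
  proof -
    have "s_nonconst X p C = (\<Sum>B\<in>Pow X. p B * (if C \<inter> B \<noteq> {} \<and> C \<inter> (X - B) \<noteq> {} then 1 else 0))" for C
    proof -
      have "S_set X C = {B \<in> Pow X. C \<inter> B \<noteq> {} \<and> C \<inter> (X - B) \<noteq> {}}"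
        by (auto simp: S_set_def)
      then show ?thesis
        unfolding s_nonconst_def using finX
          sum.inter_filter[of "Pow X" p "\<lambda>B. C \<inter> B \<noteq> {} \<and> C \<inter> (X - B) \<noteq> {}"]
        by (simp add: if_distrib cong: if_cong)
    qed
    then show ?thesis by simp
  qed
  finally show ?thesis .
qed



definition rel :: "'v set set \<Rightarrow> ('v \<times> 'v) set" where
  "rel F = {(a,b). adj F a b}"

lemma adj_sym: "adj F a b = adj F b a"
  by (simp add: adj_def insert_commute)

lemma rel_sym: "(a,b) \<in> (rel F)\<^sup>* \<Longrightarrow> (b,a) \<in> (rel F)\<^sup>*"
proof -
  have c: "(rel F)\<inverse> = rel F" by (auto simp: rel_def adj_sym)
  assume "(a,b) \<in> (rel F)\<^sup>*"
  then have "(b,a) \<in> ((rel F)\<inverse>)\<^sup>*" by (rule rtrancl_converseI)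
  then show ?thesis using c by simp
qed

lemma chain_rel:
  assumes "\<And>j. m \<le> j \<Longrightarrow> j < k \<Longrightarrow> adj F (xs!j) (xs!Suc j)" and "m \<le> k"
  shows "(xs!m, xs!k) \<in> (rel F)\<^sup>*"
  using assms
proof (induction k)
  case 0 then show ?case by simp
next
  case (Suc k)
  show ?case
  proof (cases "m = Suc k")
    case True then show ?thesis by simp
  next
    case False
    then have "(xs!m, xs!k) \<in> (rel F)\<^sup>*" using Suc by auto
    moreover have "(xs!k, xs!Suc k) \<in> rel F" using Suc.prems False by (auto simp: rel_def)
    ultimately show ?thesis by (rule rtrancl_into_rtrancl)
  qed
qed

lemma path_rel:
  assumes "is_path F xs"
  shows "(hd xs, last xs) \<in> (rel F)\<^sup>*"
proof -
  have ne: "xs \<noteq> []" using assms by (simp add: is_path_def)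
  have "(xs!0, xs!(length xs - 1)) \<in> (rel F)\<^sup>*"
    by (rule chain_rel) (use assms in \<open>auto simp: is_path_def\<close>)
  then show ?thesis using ne by (simp add: hd_conv_nth last_conv_nth)
qed

lemma rel_path:
  assumes "(a,b) \<in> (rel F)\<^sup>*"
  shows "\<exists>xs. is_path F xs \<and> hd xs = a \<and> last xs = b"
  using assms
proof (induction rule: rtrancl_induct)
  case base
  have "is_path F [a]" by (simp add: is_path_def)
  then show ?case by force
next
  case (step b c)
  then obtain xs where xs: "is_path F xs" "hd xs = a" "last xs = b" by blast
  have ne: "xs \<noteq> []" using xs by (simp add: is_path_def)
  have bc: "adj F b c" using step by (simp add: rel_def)
  show ?case
  proof (cases "c \<in> set xs")
    case True
    then obtain k where k: "k < length xs" "xs!k = c" by (auto simp: in_set_conv_nth)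
    let ?ys = "take (Suc k) xs"
    have "is_path F ?ys" using xs(1) k by (auto simp: is_path_def)
    moreover have "hd ?ys = a" using xs ne by simp
    moreover have "last ?ys = c" using k ne by (simp add: last_conv_nth)
    ultimately show ?thesis by blast
  next
    case False
    let ?ys = "xs @ [c]"
    have "adj F (?ys!i) (?ys!Suc i)" if i: "Suc i < length ?ys" for i
    proof (cases "Suc i < length xs")
      case True then show ?thesis using xs(1) by (simp add: is_path_def nth_append)
    next
      case False
      then have "i = length xs - 1" using i by simp
      then have "?ys!i = b" "?ys!Suc i = c" using xs(3) ne
        by (auto simp: nth_append last_conv_nth)
      then show ?thesis using bc by simp
    qed
    then have "is_path F ?ys" using xs(1) False by (auto simp: is_path_def)
    moreover have "hd ?ys = a" using xs ne by simp
    ultimately show ?thesis by force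
  qed
qed

lemma rel_mono: "F \<subseteq> G \<Longrightarrow> rel F \<subseteq> rel G"
  by (auto simp: rel_def adj_def)

lemma path_mono: "is_path F xs \<Longrightarrow> F \<subseteq> G \<Longrightarrow> is_path G xs"
  by (auto simp: is_path_def adj_def)

lemma no_uv:
  assumes tree: "is_tree V E" and e: "e \<in> E" "e = {u,v}" "u \<noteq> v"
  shows "(u,v) \<notin> (rel (E - {e}))\<^sup>*"
proof
  assume "(u,v) \<in> (rel (E - {e}))\<^sup>*"
  then obtain xs where xs: "is_path (E - {e}) xs" "hd xs = u" "last xs = v"
    using rel_path[of u v "E - {e}"] by blast
  have ne: "xs \<noteq> []" using xs by (simp add: is_path_def)
  have l2: "length xs \<ge> 2"
  proof (rule ccontr)
    assume "\<not> length xs \<ge> 2"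
    then have "length xs < 2" by simp
    with ne obtain y where "xs = [y]" by (cases xs) auto
    then show False using xs e(3) by simp
  qed
  have l3: "length xs \<ge> 3"
  proof (rule ccontr)
    assume "\<not> length xs \<ge> 3"
    with l2 have L: "length xs = 2" by simp
    then have "adj (E - {e}) (xs!0) (xs!1)" using xs(1) unfolding is_path_def by simp
    moreover have "xs!0 = u" using xs(2) ne by (simp add: hd_conv_nth)
    moreover have "xs!1 = v" using xs(3) ne L by (simp add: last_conv_nth)
    ultimately have "{u,v} \<in> E - {e}" by (simp add: adj_def)
    then show False using e(2) by simp
  qed
  have pE: "is_path E xs" using path_mono[OF xs(1)] by blast
  have "{v,u} \<in> E" using e(1,2) by (simp add: insert_commute)
  then have "adj E (last xs) (hd xs)" using xs(2,3) by (simp add: adj_def)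
  then have "is_cycle E xs" using l3 pE by (simp add: is_cycle_def)
  then show False using tree unfolding is_tree_def by blast
qed

lemma cover_uv:
  assumes tree: "is_tree V E" and e: "e = {u,v}" and a: "a \<in> V" and u: "u \<in> V"
  shows "(a,u) \<in> (rel (E - {e}))\<^sup>* \<or> (a,v) \<in> (rel (E - {e}))\<^sup>*"
proof -
  obtain xs where "is_path E xs" "hd xs = a" "last xs = u"
    using tree a u unfolding is_tree_def connected_graph_def by blast
  then have "(a,u) \<in> (rel E)\<^sup>*" using path_rel by fastforce
  then show ?thesis
  proof (induction rule: converse_rtrancl_induct)
    case base then show ?case by simp
  next
    case (step a b)
    show ?case
    proof (cases "{a,b} = e")
      case True
      then have "a = u \<or> a = v" using e by (auto simp: doubleton_eq_iff)
      then show ?thesis by auto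
    next
      case False
      then have ab: "(a,b) \<in> rel (E - {e})" using step(1) by (auto simp: rel_def adj_def)
      from step(3) show ?thesis
        using converse_rtrancl_into_rtrancl[OF ab] by blast
    qed
  qed
qed

lemma path_split:
  assumes p: "is_path E xs" and ep: "e \<in> path_edges xs" and e: "e = {u,v}"
  shows "((hd xs, u) \<in> (rel (E - {e}))\<^sup>* \<and> (last xs, v) \<in> (rel (E - {e}))\<^sup>*) \<or>
         ((hd xs, v) \<in> (rel (E - {e}))\<^sup>* \<and> (last xs, u) \<in> (rel (E - {e}))\<^sup>*)"
proof -
  obtain i where i: "Suc i < length xs" "e = {xs!i, xs!Suc i}"
    using ep by (auto simp: path_edges_def)
  have dist: "distinct xs" and ne: "xs \<noteq> []" using p by (auto simp: is_path_def)
  have adj': "adj (E - {e}) (xs!j) (xs!Suc j)" if j: "Suc j < length xs" "j \<noteq> i" for j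
  proof -
    have "adj E (xs!j) (xs!Suc j)" using p j by (simp add: is_path_def)
    moreover have "{xs!j, xs!Suc j} \<noteq> e"
    proof
      assume eq: "{xs!j, xs!Suc j} = e"
      then have "xs!j = xs!i \<or> xs!j = xs!Suc i" using i by auto
      then have "j = Suc i" using j i dist by (auto simp: nth_eq_iff_index_eq)
      moreover have "xs!Suc j = xs!i \<or> xs!Suc j = xs!Suc i" using eq i by auto
      ultimately show False using j i dist by (auto simp: nth_eq_iff_index_eq)
    qed
    ultimately show ?thesis by (simp add: adj_def)
  qed
  have r1: "(xs!0, xs!i) \<in> (rel (E - {e}))\<^sup>*"
    by (rule chain_rel) (use adj' i in auto)
  have r2: "(xs!Suc i, xs!(length xs - 1)) \<in> (rel (E - {e}))\<^sup>*"
    by (rule chain_rel) (use adj' i in auto)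
  have h: "hd xs = xs!0" "last xs = xs!(length xs - 1)" using ne by (auto simp: hd_conv_nth last_conv_nth)
  have "(xs!i = u \<and> xs!Suc i = v) \<or> (xs!i = v \<and> xs!Suc i = u)"
    using i e by (auto simp: doubleton_eq_iff)
  then show ?thesis using r1 rel_sym[OF r2] h by auto
qed

lemma path_avoid:
  assumes p: "is_path E xs" and ep: "e \<notin> path_edges xs"
  shows "(hd xs, last xs) \<in> (rel (E - {e}))\<^sup>*"
proof -
  have "is_path (E - {e}) xs"
    using p ep by (auto simp: is_path_def adj_def path_edges_def)
  then show ?thesis by (rule path_rel)
qed

lemma split_side_rel:
  "split_side X E phi e w = {x\<in>X. (w, phi x) \<in> (rel (E - {e}))\<^sup>*}"
proof -
  have "(\<exists>xs. is_path (E - {e}) xs \<and> hd xs = w \<and> last xs = phi x) \<longleftrightarrow> (w, phi x) \<in> (rel (E - {e}))\<^sup>*" for x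
    using path_rel[of "E - {e}"] rel_path[of w "phi x" "E - {e}"] by metis
  then show ?thesis unfolding split_side_def by simp
qed

lemma edge_facts:
  assumes pt: "phylo_tree X V E phi" and eE: "e \<in> E"
  shows "\<exists>S. S \<subseteq> X \<and> (\<forall>C. C \<subseteq> X \<longrightarrow> (e \<in> span_edges E phi C \<longleftrightarrow> C \<inter> S \<noteq> {} \<and> C \<inter> (X - S) \<noteq> {}))
           \<and> {B. edge_induces X E phi e B} = {S, X - S}"
proof -
  have tree: "is_tree V E" using pt by (simp add: phylo_tree_def)
  have bij: "bij_betw phi X {v\<in>V. Defs.degree E v \<le> 1}" using pt by (simp add: phylo_tree_def)
  have phiV: "phi x \<in> V" if "x \<in> X" for x using bij_betw_apply[OF bij that] by simp
  have gr: "graph V E" using tree by (simp add: is_tree_def)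
  then obtain u v where e: "e = {u,v}" "u \<noteq> v" "u \<in> V" "v \<in> V"
    using eE unfolding graph_def by blast
  define R where "R = (rel (E - {e}))\<^sup>*"
  have Rsym: "(a,b) \<in> R \<Longrightarrow> (b,a) \<in> R" for a b unfolding R_def by (rule rel_sym)
  have Rtrans: "(a,b) \<in> R \<Longrightarrow> (b,c) \<in> R \<Longrightarrow> (a,c) \<in> R" for a b c
    unfolding R_def by (rule rtrancl_trans)
  have nuv: "(u,v) \<notin> R" unfolding R_def by (rule no_uv[OF tree eE e(1,2)])
  define Su where "Su = split_side X E phi e u"
  define Sv where "Sv = split_side X E phi e v"
  have Su: "Su = {x\<in>X. (u, phi x) \<in> R}" unfolding Su_def R_def by (rule split_side_rel)
  have Sv: "Sv = {x\<in>X. (v, phi x) \<in> R}" unfolding Sv_def R_def by (rule split_side_rel)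
  have SvX: "Sv = X - Su"
  proof
    show "Sv \<subseteq> X - Su"
    proof
      fix x assume "x \<in> Sv"
      then have x: "x \<in> X" "(v, phi x) \<in> R" using Sv by auto
      have "(u, phi x) \<notin> R"
      proof
        assume "(u, phi x) \<in> R"
        then have "(u, v) \<in> R" using Rtrans Rsym[OF x(2)] by blast
        then show False using nuv by simp
      qed
      then show "x \<in> X - Su" using x Su by auto
    qed
  next
    show "X - Su \<subseteq> Sv"
    proof
      fix x assume x: "x \<in> X - Su"
      have "(phi x, u) \<in> R \<or> (phi x, v) \<in> R"
        unfolding R_def by (rule cover_uv[OF tree e(1) phiV e(3)]) (use x in auto)
      then show "x \<in> Sv" using x Su Sv Rsym by auto
    qed
  qed
  have SuX: "Su \<subseteq> X" using Su by auto
  have span: "e \<in> span_edges E phi C \<longleftrightarrow> C \<inter> Su \<noteq> {} \<and> C \<inter> (X - Su) \<noteq> {}" if CX: "C \<subseteq> X" for C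
  proof
    assume "e \<in> span_edges E phi C"
    then obtain xs x y where xy: "x \<in> C" "y \<in> C" "is_path E xs" "hd xs = phi x" "last xs = phi y"
        "e \<in> path_edges xs"
      unfolding span_edges_def by blast
    have "((phi x, u) \<in> R \<and> (phi y, v) \<in> R) \<or> ((phi x, v) \<in> R \<and> (phi y, u) \<in> R)"
      using path_split[OF xy(3) xy(6) e(1)] xy(4,5) unfolding R_def by simp
    then have "(x \<in> Su \<and> y \<in> Sv) \<or> (x \<in> Sv \<and> y \<in> Su)"
      using Su Sv Rsym xy(1,2) CX by blast
    then show "C \<inter> Su \<noteq> {} \<and> C \<inter> (X - Su) \<noteq> {}" using xy(1,2) SvX by blast
  next
    assume "C \<inter> Su \<noteq> {} \<and> C \<inter> (X - Su) \<noteq> {}"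
    then obtain x y where xy: "x \<in> C" "x \<in> Su" "y \<in> C" "y \<in> Sv" using SvX by blast
    have X: "x \<in> X" "y \<in> X" using xy CX by auto
    obtain xs where xs: "is_path E xs" "hd xs = phi x" "last xs = phi y"
      using tree phiV[OF X(1)] phiV[OF X(2)] unfolding is_tree_def connected_graph_def by blast
    have "e \<in> path_edges xs"
    proof (rule ccontr)
      assume "e \<notin> path_edges xs"
      then have "(phi x, phi y) \<in> R" using path_avoid[OF xs(1)] xs(2,3) unfolding R_def by simp
      moreover have "(u, phi x) \<in> R" "(phi y, v) \<in> R" using xy Su Sv Rsym by auto
      ultimately have "(u, v) \<in> R" using Rtrans by blast
      then show False using nuv by simp
    qed
    then show "e \<in> span_edges E phi C"
      unfolding span_edges_def using xy(1,3) xs by blast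
  qed
  have ind: "{B. edge_induces X E phi e B} = {Su, X - Su}"
    using SvX unfolding edge_induces_def Su_def Sv_def e(1) by auto
  show ?thesis using SuX span ind by blast
qed

lemma span_sub: "span_edges E phi C \<subseteq> E"
  unfolding span_edges_def path_edges_def is_path_def adj_def by blast

lemma part2:
  fixes X A :: "'a set" and V :: "'v set" and E :: "'v set set" and phi :: "'a \<Rightarrow> 'v"
    and w :: "'v set \<Rightarrow> real"
  assumes finX: "finite X" and AX: "A \<subseteq> X" and ev: "even (card A)"
    and pt: "phylo_tree X V E phi"
  shows "mu X E phi w A = 1/4 * (\<Sum>B\<in>{B. B \<subseteq> A \<and> even (card B)}.
                 2 ^ card B * euler_number (card A - card B) * delta E phi w B)"
proof -
  have finA: "finite A" using finX AX finite_subset by auto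
  have gr: "graph V E" using pt by (simp add: phylo_tree_def is_tree_def)
  have finV: "finite V" using gr by (simp add: graph_def)
  have "E \<subseteq> Pow V"
  proof
    fix e assume "e \<in> E"
    then obtain u v where "e = {u,v}" "u \<in> V" "v \<in> V" using gr unfolding graph_def by blast
    then show "e \<in> Pow V" by auto
  qed
  then have finE: "finite E" by (rule finite_subset) (simp add: finV)
  define S where "S e = (SOME S. S \<subseteq> X \<and> (\<forall>C. C \<subseteq> X \<longrightarrow> (e \<in> span_edges E phi C \<longleftrightarrow> C \<inter> S \<noteq> {} \<and> C \<inter> (X - S) \<noteq> {}))
           \<and> {B. edge_induces X E phi e B} = {S, X - S})" for e
  have Sp: "S e \<subseteq> X \<and> (\<forall>C. C \<subseteq> X \<longrightarrow> (e \<in> span_edges E phi C \<longleftrightarrow> C \<inter> S e \<noteq> {} \<and> C \<inter> (X - S e) \<noteq> {}))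
           \<and> {B. edge_induces X E phi e B} = {S e, X - S e}" if "e \<in> E" for e
    unfolding S_def by (rule someI_ex[OF edge_facts[OF pt that]])
  let ?B = "{B. B \<subseteq> X \<and> odd (card (A \<inter> B))}"
  have "?B \<subseteq> Pow X" by auto
  then have finB: "finite ?B" by (rule finite_subset) (simp add: finX)
  have cnt: "(\<Sum>B\<in>?B. if edge_induces X E phi e B then 1 else 0) = 2 * (if odd (card (A \<inter> S e)) then 1 else (0::real))"
    if eE: "e \<in> E" for e
  proof -
    have SX: "S e \<subseteq> X" and ind: "{B. edge_induces X E phi e B} = {S e, X - S e}" using Sp[OF eE] by auto
    have "(\<Sum>B\<in>?B. if edge_induces X E phi e B then 1 else (0::real)) = (\<Sum>B\<in>?B. if B \<in> {S e, X - S e} then 1 else 0)"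
      using ind by (intro sum.cong) (auto simp: set_eq_iff)
    also have "\<dots> = (\<Sum>B\<in>?B \<inter> {S e, X - S e}. 1)"
      using sum.inter_restrict[OF finB, of "\<lambda>_. (1::real)" "{S e, X - S e}"] by simp
    also have "\<dots> = real (card (?B \<inter> {S e, X - S e}))" by simp
    also have "\<dots> = 2 * (if odd (card (A \<inter> S e)) then 1 else 0)"
    proof -
      have c1: "A \<inter> (X - S e) = A - (A \<inter> S e)" using AX by auto
      have c2: "card (A \<inter> (X - S e)) = card A - card (A \<inter> S e)"
        unfolding c1 using finA by (simp add: card_Diff_subset finite_subset)
      have c3: "card (A \<inter> S e) \<le> card A" using finA by (simp add: card_mono)
      show ?thesis
      proof (cases "odd (card (A \<inter> S e))")
        case True
        then have o2: "odd (card (A \<inter> (X - S e)))" using c2 c3 ev by auto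
        have ne: "S e \<noteq> X - S e"
        proof
          assume "S e = X - S e"
          then have "S e = {}" by blast
          then show False using True by simp
        qed
        have "?B \<inter> {S e, X - S e} = {S e, X - S e}" using True o2 SX by auto
        then show ?thesis using ne True by simp
      next
        case False
        then have o2: "even (card (A \<inter> (X - S e)))" using c2 c3 ev by auto
        have "?B \<inter> {S e, X - S e} = {}" using False o2 by auto
        then show ?thesis using False by simp
      qed
    qed
    finally show ?thesis .
  qed
  have "mu X E phi w A = (\<Sum>B\<in>?B. \<Sum>e\<in>E. w e * (if edge_induces X E phi e B then 1 else 0)) / 2"
    unfolding mu_def wtilde_def split_weight_def sum_divide_distrib[symmetric]
  proof (rule arg_cong[where f = "\<lambda>x. x / 2"], rule sum.cong)
    fix B
    show "(\<Sum>e\<in>{e \<in> E. edge_induces X E phi e B}. w e) = (\<Sum>e\<in>E. w e * (if edge_induces X E phi e B then 1 else 0))"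
      using sum.inter_filter[OF finE, of w "\<lambda>e. edge_induces X E phi e B"] by (simp add: if_distrib cong: if_cong)
  qed simp
  also have "\<dots> = (\<Sum>e\<in>E. w e * (\<Sum>B\<in>?B. if edge_induces X E phi e B then 1 else 0)) / 2"
  proof -
    have "(\<Sum>B\<in>?B. \<Sum>e\<in>E. w e * (if edge_induces X E phi e B then 1 else 0))
        = (\<Sum>e\<in>E. \<Sum>B\<in>?B. w e * (if edge_induces X E phi e B then 1 else 0))"
      by (rule sum.swap)
    then show ?thesis by (simp only: sum_distrib_left)
  qed
  also have "\<dots> = (\<Sum>e\<in>E. w e * (if odd (card (A \<inter> S e)) then 1 else 0))"
    unfolding sum_divide_distrib by (rule sum.cong) (simp_all add: cnt)
  also have "\<dots> = 1/4 * (\<Sum>C\<in>{C. C \<subseteq> A \<and> even (card C)}. 2^card C * euler_number (card A - card C) *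
            (\<Sum>e\<in>E. w e * (if e \<in> span_edges E phi C then 1 else 0)))"
  proof (rule swap_core[symmetric, OF finA ev finE])
    show "\<And>e. e \<in> E \<Longrightarrow> A \<inter> S e \<subseteq> A" by blast
    fix C e assume C: "C \<subseteq> A" and e: "e \<in> E"
    have CX: "C \<subseteq> X" using C AX by (rule subset_trans)
    have "\<forall>C. C \<subseteq> X \<longrightarrow> (e \<in> span_edges E phi C \<longleftrightarrow> C \<inter> S e \<noteq> {} \<and> C \<inter> (X - S e) \<noteq> {})"
      using Sp[OF e] by (rule conjunct1[OF conjunct2])
    then have "e \<in> span_edges E phi C \<longleftrightarrow> C \<inter> S e \<noteq> {} \<and> C \<inter> (X - S e) \<noteq> {}"
      using CX by simp
    then show "e \<in> span_edges E phi C \<longleftrightarrow> C \<inter> (A \<inter> S e) \<noteq> {} \<and> C \<inter> (A - A \<inter> S e) \<noteq> {}"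
      using C AX by blast
  qed
  also have "\<dots> = 1/4 * (\<Sum>B\<in>{B. B \<subseteq> A \<and> even (card B)}.
                 2 ^ card B * euler_number (card A - card B) * delta E phi w B)"
  proof -
    have "delta E phi w C = (\<Sum>e\<in>E. w e * (if e \<in> span_edges E phi C then 1 else 0))"
      if C: "C \<in> {C. C \<subseteq> A \<and> even (card C)}" for C
    proof (cases "card C \<le> 1")
      case True
      then have "card C = 0" using C by auto
      moreover have "finite C" using C finA finite_subset by auto
      ultimately have "C = {}" by simp
      then have "span_edges E phi C = {}" by (simp add: span_edges_def)
      then show ?thesis using True by (simp add: delta_def)
    next
      case False
      have "span_edges E phi C = E \<inter> span_edges E phi C" using span_sub by blast
      then have "(\<Sum>e\<in>span_edges E phi C. w e) = (\<Sum>e\<in>E. if e \<in> span_edges E phi C then w e else 0)"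
        using sum.inter_restrict[OF finE, of w "span_edges E phi C"] by simp
      then show ?thesis using False by (simp add: delta_def if_distrib cong: if_cong)
    qed
    then show ?thesis by (intro arg_cong[where f = "\<lambda>x. 1/4 * x"] sum.cong) auto
  qed
  finally show ?thesis .
qed


theorem theorem6:
  fixes X A :: "'a set"
  assumes "finite X" and "A \<subseteq> X" and "even (card A)"
  shows "(\<forall>p :: 'a set \<Rightarrow> real.
            (\<forall>B. B \<subseteq> X \<longrightarrow> p B \<ge> 0) \<and> (\<Sum>B\<in>Pow X. p B) = 1 \<longrightarrow>
            gamma X p A = 1/4 * (\<Sum>B\<in>{B. B \<subseteq> A \<and> even (card B)}.
                 2 ^ card B * euler_number (card A - card B) * s_nonconst X p B))
       \<and> (\<forall>(V :: 'v set) E (phi :: 'a \<Rightarrow> 'v) (w :: 'v set \<Rightarrow> real).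
            phylo_tree X V E phi \<and> (\<forall>e\<in>E. w e \<ge> 0) \<longrightarrow>
            mu X E phi w A = 1/4 * (\<Sum>B\<in>{B. B \<subseteq> A \<and> even (card B)}.
                 2 ^ card B * euler_number (card A - card B) * delta E phi w B))"
  using part1[OF assms] part2[OF assms] by blast

end
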